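(* In the setting below, the assignment $\square$ on corelations preserves composition: for corelations $f\colon X\to Y$ and $g\colon Y\to Z$ in $\mathrm{Corel}_{(\mathcal E,\mathcal M)}(\mathcal C)$, $\square(g\circ f)=\square(g)\circ\square(f)$ as morphisms of $\mathrm{Corel}_{(\mathcal E',\mathcal M')}(\mathcal C')$ (i.e. up to isomorphism of cospans).
   Context: $\mathcal C,\mathcal C'$ are categories with finite colimits with costable factorisation systems $(\mathcal E,\mathcal M)$, $(\mathcal E',\mathcal M')$ (factorisation systems whose right class is stable under pushout). $A\colon\mathcal C\to\mathcal C'$ preserves finite colimits and $A(\mathcal M)\subseteq\mathcal M'$. An $(\mathcal E,\mathcal M)$-corelation is a cospan $X\xrightarrow{i}N\xleftarrow{o}Y$ with $[i,o]\in\mathcal E$, up to isomorphism; the $\mathcal E$-part of an arbitrary cospan is obtained by factoring $[i,o]=m\circ e$ ($e\colon X+Y\to\overline N\in\mathcal E$, $m\in\mathcal M$) and taking $X\xrightarrow{e\iota_X}\overline N\xleftarrow{e\iota_Y}Y$; corelations compose by taking the $\mathcal E$-part of the pushout composite cospan. The map $\square$ sends an $(\mathcal E,\mathcal M)$-corelation $X\xrightarrow{i}N\xleftarrow{o}Y$ to the $\mathcal E'$-part of the cospan $AX\xrightarrow{Ai}AN\xleftarrow{Ao}AY$. *)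

theory Defs
  imports Main
begin

record ('o, 'a) cat =
  cobj  :: "'o set"
  carr  :: "'a set"
  cdom  :: "'a \<Rightarrow> 'o"
  ccod  :: "'a \<Rightarrow> 'o"
  ccomp :: "'a \<Rightarrow> 'a \<Rightarrow> 'a"   (* ccomp C g f = g o f *)
  cid   :: "'o \<Rightarrow> 'a"

definition hom :: "('o, 'a) cat \<Rightarrow> 'o \<Rightarrow> 'o \<Rightarrow> 'a set" where
  "hom C x y = {f \<in> carr C. cdom C f = x \<and> ccod C f = y}"

definition category :: "('o, 'a) cat \<Rightarrow> bool" where
  "category C \<longleftrightarrow>
     (\<forall>f \<in> carr C. cdom C f \<in> cobj C \<and> ccod C f \<in> cobj C) \<and>
     (\<forall>x \<in> cobj C. cid C x \<in> hom C x x) \<and>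
     (\<forall>f \<in> carr C. \<forall>g \<in> carr C. ccod C f = cdom C g \<longrightarrow>
        ccomp C g f \<in> hom C (cdom C f) (ccod C g)) \<and>
     (\<forall>f \<in> carr C. ccomp C (cid C (ccod C f)) f = f \<and> ccomp C f (cid C (cdom C f)) = f) \<and>
     (\<forall>f \<in> carr C. \<forall>g \<in> carr C. \<forall>h \<in> carr C.
        ccod C f = cdom C g \<longrightarrow> ccod C g = cdom C h \<longrightarrow>
        ccomp C h (ccomp C g f) = ccomp C (ccomp C h g) f)"

definition iso :: "('o, 'a) cat \<Rightarrow> 'a \<Rightarrow> bool" where
  "iso C f \<longleftrightarrow> f \<in> carr C \<and>
     (\<exists>g \<in> hom C (ccod C f) (cdom C f).
        ccomp C g f = cid C (cdom C f) \<and> ccomp C f g = cid C (ccod C f))"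

definition is_initial :: "('o, 'a) cat \<Rightarrow> 'o \<Rightarrow> bool" where
  "is_initial C I \<longleftrightarrow> I \<in> cobj C \<and>
     (\<forall>T \<in> cobj C. \<exists>h \<in> hom C I T. \<forall>h' \<in> hom C I T. h' = h)"

definition is_coproduct :: "('o, 'a) cat \<Rightarrow> 'o \<Rightarrow> 'o \<Rightarrow> 'o \<Rightarrow> 'a \<Rightarrow> 'a \<Rightarrow> bool" where
  "is_coproduct C X Y S i1 i2 \<longleftrightarrow> i1 \<in> hom C X S \<and> i2 \<in> hom C Y S \<and>
     (\<forall>T f g. f \<in> hom C X T \<longrightarrow> g \<in> hom C Y T \<longrightarrow>
        (\<exists>h \<in> hom C S T. ccomp C h i1 = f \<and> ccomp C h i2 = g \<and>
           (\<forall>h' \<in> hom C S T. ccomp C h' i1 = f \<and> ccomp C h' i2 = g \<longrightarrow> h' = h)))"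

definition is_pushout :: "('o, 'a) cat \<Rightarrow> 'a \<Rightarrow> 'a \<Rightarrow> 'a \<Rightarrow> 'a \<Rightarrow> bool" where
  "is_pushout C f g p q \<longleftrightarrow> f \<in> carr C \<and> g \<in> carr C \<and> cdom C f = cdom C g \<and>
     p \<in> hom C (ccod C f) (ccod C p) \<and> q \<in> hom C (ccod C g) (ccod C p) \<and>
     ccod C q = ccod C p \<and> ccomp C p f = ccomp C q g \<and>
     (\<forall>T u v. u \<in> hom C (ccod C f) T \<longrightarrow> v \<in> hom C (ccod C g) T \<longrightarrow>
        ccomp C u f = ccomp C v g \<longrightarrow>
        (\<exists>h \<in> hom C (ccod C p) T. ccomp C h p = u \<and> ccomp C h q = v \<and>
           (\<forall>h' \<in> hom C (ccod C p) T. ccomp C h' p = u \<and> ccomp C h' q = v \<longrightarrow> h' = h)))"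

text \<open>Finite colimits: generated by an initial object, binary coproducts and pushouts.\<close>
definition has_finite_colimits :: "('o, 'a) cat \<Rightarrow> bool" where
  "has_finite_colimits C \<longleftrightarrow>
     (\<exists>I. is_initial C I) \<and>
     (\<forall>X \<in> cobj C. \<forall>Y \<in> cobj C. \<exists>S i1 i2. is_coproduct C X Y S i1 i2) \<and>
     (\<forall>f \<in> carr C. \<forall>g \<in> carr C. cdom C f = cdom C g \<longrightarrow> (\<exists>p q. is_pushout C f g p q))"

definition factorisation_system :: "('o, 'a) cat \<Rightarrow> 'a set \<Rightarrow> 'a set \<Rightarrow> bool" where
  "factorisation_system C E M \<longleftrightarrow>
     E \<subseteq> carr C \<and> M \<subseteq> carr C \<and>
     {f. iso C f} \<subseteq> E \<and> {f. iso C f} \<subseteq> M \<and>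
     (\<forall>e1 \<in> E. \<forall>e2 \<in> E. ccod C e1 = cdom C e2 \<longrightarrow> ccomp C e2 e1 \<in> E) \<and>
     (\<forall>m1 \<in> M. \<forall>m2 \<in> M. ccod C m1 = cdom C m2 \<longrightarrow> ccomp C m2 m1 \<in> M) \<and>
     (\<forall>f \<in> carr C. \<exists>e \<in> E. \<exists>m \<in> M. cdom C e = cdom C f \<and> ccod C e = cdom C m \<and>
        ccod C m = ccod C f \<and> ccomp C m e = f) \<and>
     (\<forall>e \<in> E. \<forall>m \<in> M. \<forall>u v. u \<in> hom C (cdom C e) (cdom C m) \<longrightarrow>
        v \<in> hom C (ccod C e) (ccod C m) \<longrightarrow> ccomp C m u = ccomp C v e \<longrightarrow>
        (\<exists>d \<in> hom C (ccod C e) (cdom C m). ccomp C d e = u \<and> ccomp C m d = v \<and>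
           (\<forall>d' \<in> hom C (ccod C e) (cdom C m). ccomp C d' e = u \<and> ccomp C m d' = v \<longrightarrow> d' = d)))"

definition costable :: "('o, 'a) cat \<Rightarrow> 'a set \<Rightarrow> bool" where
  "costable C M \<longleftrightarrow> (\<forall>m \<in> M. \<forall>f p q. is_pushout C m f p q \<longrightarrow> q \<in> M)"

definition is_functor :: "('o, 'a) cat \<Rightarrow> ('p, 'b) cat \<Rightarrow> ('o \<Rightarrow> 'p) \<Rightarrow> ('a \<Rightarrow> 'b) \<Rightarrow> bool" where
  "is_functor C D Fo Fa \<longleftrightarrow>
     (\<forall>x \<in> cobj C. Fo x \<in> cobj D) \<and>
     (\<forall>f \<in> carr C. Fa f \<in> hom D (Fo (cdom C f)) (Fo (ccod C f))) \<and>
     (\<forall>x \<in> cobj C. Fa (cid C x) = cid D (Fo x)) \<and>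
     (\<forall>f \<in> carr C. \<forall>g \<in> carr C. ccod C f = cdom C g \<longrightarrow>
        Fa (ccomp C g f) = ccomp D (Fa g) (Fa f))"

definition preserves_finite_colimits ::
  "('o, 'a) cat \<Rightarrow> ('p, 'b) cat \<Rightarrow> ('o \<Rightarrow> 'p) \<Rightarrow> ('a \<Rightarrow> 'b) \<Rightarrow> bool" where
  "preserves_finite_colimits C D Fo Fa \<longleftrightarrow>
     (\<forall>I. is_initial C I \<longrightarrow> is_initial D (Fo I)) \<and>
     (\<forall>X Y S i1 i2. is_coproduct C X Y S i1 i2 \<longrightarrow>
        is_coproduct D (Fo X) (Fo Y) (Fo S) (Fa i1) (Fa i2)) \<and>
     (\<forall>f g p q. is_pushout C f g p q \<longrightarrow> is_pushout D (Fa f) (Fa g) (Fa p) (Fa q))"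

text \<open>A cospan X -i-> N <-u- Y is represented by the pair (i, u) with
  X = dom i, Y = dom u, N = cod i = cod u.\<close>
definition is_cospan :: "('u, 'a) cat \<Rightarrow> 'u \<Rightarrow> 'u \<Rightarrow> 'a \<times> 'a \<Rightarrow> bool" where
  "is_cospan C X Y c \<longleftrightarrow> (case c of (i, u) \<Rightarrow>
     i \<in> carr C \<and> u \<in> carr C \<and> cdom C i = X \<and> cdom C u = Y \<and> ccod C i = ccod C u)"

definition cospan_iso :: "('u, 'a) cat \<Rightarrow> 'a \<times> 'a \<Rightarrow> 'a \<times> 'a \<Rightarrow> bool" where
  "cospan_iso C c c' \<longleftrightarrow> (case c of (i, u) \<Rightarrow> case c' of (i', u') \<Rightarrow>
     (\<exists>\<phi> \<in> hom C (ccod C i) (ccod C i'). iso C \<phi> \<and>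
        ccomp C \<phi> i = i' \<and> ccomp C \<phi> u = u'))"

text \<open>(E,M)-corelation X \<rightarrow> Y: a cospan whose copairing [i,u] : X+Y \<rightarrow> N lies in E.\<close>
definition is_corel :: "('u, 'a) cat \<Rightarrow> 'a set \<Rightarrow> 'u \<Rightarrow> 'u \<Rightarrow> 'a \<times> 'a \<Rightarrow> bool" where
  "is_corel C E X Y c \<longleftrightarrow> is_cospan C X Y c \<and> (case c of (i, u) \<Rightarrow>
     (\<exists>S j1 j2 h. is_coproduct C X Y S j1 j2 \<and> h \<in> hom C S (ccod C i) \<and>
        ccomp C h j1 = i \<and> ccomp C h j2 = u \<and> h \<in> E))"

text \<open>c' is an E-part of the cospan c = (i,u): factor [i,u] = m \<circ> e with e \<in> E,
  m \<in> M, and take (e \<circ> \<iota>X, e \<circ> \<iota>Y).\<close>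
definition is_Epart :: "('u, 'a) cat \<Rightarrow> 'a set \<Rightarrow> 'a set \<Rightarrow> 'a \<times> 'a \<Rightarrow> 'a \<times> 'a \<Rightarrow> bool" where
  "is_Epart C E M c c' \<longleftrightarrow> (case c of (i, u) \<Rightarrow> case c' of (i', u') \<Rightarrow>
     is_cospan C (cdom C i) (cdom C u) (i, u) \<and>
     (\<exists>S j1 j2 h e m. is_coproduct C (cdom C i) (cdom C u) S j1 j2 \<and>
        h \<in> hom C S (ccod C i) \<and> ccomp C h j1 = i \<and> ccomp C h j2 = u \<and>
        e \<in> E \<and> m \<in> M \<and> cdom C e = S \<and> ccod C e = cdom C m \<and> ccod C m = ccod C i \<and>
        ccomp C m e = h \<and> i' = ccomp C e j1 \<and> u' = ccomp C e j2))"

definition is_cospan_comp :: "('u, 'a) cat \<Rightarrow> 'a \<times> 'a \<Rightarrow> 'a \<times> 'a \<Rightarrow> 'a \<times> 'a \<Rightarrow> bool" where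
  "is_cospan_comp C c1 c2 c \<longleftrightarrow> (case c1 of (i1, u1) \<Rightarrow> case c2 of (i2, u2) \<Rightarrow>
     case c of (i, u) \<Rightarrow>
     (\<exists>p q. is_pushout C u1 i2 p q \<and> i = ccomp C p i1 \<and> u = ccomp C q u2))"

definition is_corel_comp :: "('u, 'a) cat \<Rightarrow> 'a set \<Rightarrow> 'a set \<Rightarrow> 'a \<times> 'a \<Rightarrow> 'a \<times> 'a \<Rightarrow> 'a \<times> 'a \<Rightarrow> bool" where
  "is_corel_comp C E M c1 c2 c \<longleftrightarrow> (\<exists>k. is_cospan_comp C c1 c2 k \<and> is_Epart C E M k c)"

definition is_box :: "('p, 'b) cat \<Rightarrow> 'b set \<Rightarrow> 'b set \<Rightarrow> ('a \<Rightarrow> 'b) \<Rightarrow> 'a \<times> 'a \<Rightarrow> 'b \<times> 'b \<Rightarrow> bool" where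
  "is_box D E' M' Fa c c' \<longleftrightarrow> (case c of (i, u) \<Rightarrow> is_Epart D E' M' (Fa i, Fa u) c')"

end

theory Submission
  imports Defs
begin

lemma hom_iff: "f \<in> hom C x y \<longleftrightarrow> f \<in> carr C \<and> cdom C f = x \<and> ccod C f = y"
  by (simp add: hom_def)

lemma cc_carr[simp]: "category C \<Longrightarrow> f \<in> carr C \<Longrightarrow> g \<in> carr C \<Longrightarrow> ccod C f = cdom C g \<Longrightarrow> ccomp C g f \<in> carr C"
  unfolding category_def hom_def by blast
lemma cc_dom[simp]: "category C \<Longrightarrow> f \<in> carr C \<Longrightarrow> g \<in> carr C \<Longrightarrow> ccod C f = cdom C g \<Longrightarrow> cdom C (ccomp C g f) = cdom C f"
  unfolding category_def hom_def by blast
lemma cc_cod[simp]: "category C \<Longrightarrow> f \<in> carr C \<Longrightarrow> g \<in> carr C \<Longrightarrow> ccod C f = cdom C g \<Longrightarrow> ccod C (ccomp C g f) = ccod C g"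
  unfolding category_def hom_def by blast
lemma cc_assoc: "category C \<Longrightarrow> f \<in> carr C \<Longrightarrow> g \<in> carr C \<Longrightarrow> h \<in> carr C \<Longrightarrow> ccod C f = cdom C g \<Longrightarrow> ccod C g = cdom C h \<Longrightarrow>
   ccomp C h (ccomp C g f) = ccomp C (ccomp C h g) f"
  unfolding category_def by blast
lemma cid_carr[simp]: "category C \<Longrightarrow> x \<in> cobj C \<Longrightarrow> cid C x \<in> carr C"
  unfolding category_def hom_def by blast
lemma cid_dom[simp]: "category C \<Longrightarrow> x \<in> cobj C \<Longrightarrow> cdom C (cid C x) = x"
  unfolding category_def hom_def by blast
lemma cid_cod[simp]: "category C \<Longrightarrow> x \<in> cobj C \<Longrightarrow> ccod C (cid C x) = x"
  unfolding category_def hom_def by blast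
lemma cid_l: "category C \<Longrightarrow> f \<in> carr C \<Longrightarrow> ccod C f = y \<Longrightarrow> ccomp C (cid C y) f = f"
  unfolding category_def by blast
lemma cid_r: "category C \<Longrightarrow> f \<in> carr C \<Longrightarrow> cdom C f = x \<Longrightarrow> ccomp C f (cid C x) = f"
  unfolding category_def by blast
lemma dom_obj: "category C \<Longrightarrow> f \<in> carr C \<Longrightarrow> cdom C f \<in> cobj C"
  unfolding category_def by blast
lemma cod_obj: "category C \<Longrightarrow> f \<in> carr C \<Longrightarrow> ccod C f \<in> cobj C"
  unfolding category_def by blast

lemma po_sym: assumes "is_pushout C f g p q" shows "is_pushout C g f q p"
proof -
  have A: "f \<in> carr C \<and> g \<in> carr C \<and> cdom C f = cdom C g \<and>
     p \<in> hom C (ccod C f) (ccod C p) \<and> q \<in> hom C (ccod C g) (ccod C p) \<and>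
     ccod C q = ccod C p \<and> ccomp C p f = ccomp C q g" using assms unfolding is_pushout_def by blast
  have U: "\<And>T u v. u \<in> hom C (ccod C f) T \<Longrightarrow> v \<in> hom C (ccod C g) T \<Longrightarrow>
        ccomp C u f = ccomp C v g \<Longrightarrow>
        (\<exists>h \<in> hom C (ccod C p) T. ccomp C h p = u \<and> ccomp C h q = v \<and>
           (\<forall>h' \<in> hom C (ccod C p) T. ccomp C h' p = u \<and> ccomp C h' q = v \<longrightarrow> h' = h))"
    using assms unfolding is_pushout_def by blast
  show ?thesis unfolding is_pushout_def
  proof (intro conjI allI impI)
    fix T u v assume u: "u \<in> hom C (ccod C g) T" and v: "v \<in> hom C (ccod C f) T" and c: "ccomp C u g = ccomp C v f"
    from U[OF v u c[symmetric]] show "\<exists>h\<in>hom C (ccod C q) T. ccomp C h q = u \<and> ccomp C h p = v \<and>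
        (\<forall>h'\<in>hom C (ccod C q) T. ccomp C h' q = u \<and> ccomp C h' p = v \<longrightarrow> h' = h)" using A by metis
  qed (use A in \<open>auto simp: hom_def\<close>)
qed

lemma po_basic: assumes "is_pushout C f g p q"
  shows "f \<in> carr C" "g \<in> carr C" "cdom C f = cdom C g" "p \<in> carr C" "q \<in> carr C"
   "cdom C p = ccod C f" "cdom C q = ccod C g" "ccod C q = ccod C p" "ccomp C p f = ccomp C q g"
  using assms unfolding is_pushout_def hom_def by auto

lemma po_univ: assumes "is_pushout C f g p q" "u \<in> hom C (ccod C f) T" "v \<in> hom C (ccod C g) T"
   "ccomp C u f = ccomp C v g"
  obtains h where "h \<in> hom C (ccod C p) T" "ccomp C h p = u" "ccomp C h q = v"
  using assms unfolding is_pushout_def by blast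

lemma po_uniq: assumes "category C" "is_pushout C f g p q" "h \<in> hom C (ccod C p) T" "h' \<in> hom C (ccod C p) T"
   "ccomp C h p = ccomp C h' p" "ccomp C h q = ccomp C h' q"
  shows "h = h'"
proof -
  note b = po_basic[OF assms(2)]
  let ?u = "ccomp C h p" and ?v = "ccomp C h q"
  have u: "?u \<in> hom C (ccod C f) T" using assms b by (auto simp: hom_def)
  have v: "?v \<in> hom C (ccod C g) T" using assms b by (auto simp: hom_def)
  have c: "ccomp C ?u f = ccomp C ?v g"
    using assms b by (metis cc_assoc hom_iff)
  from assms(2) u v c obtain h0 where h0: "h0 \<in> hom C (ccod C p) T"
    "\<forall>h' \<in> hom C (ccod C p) T. ccomp C h' p = ?u \<and> ccomp C h' q = ?v \<longrightarrow> h' = h0"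
    unfolding is_pushout_def by blast
  then show ?thesis using assms by metis
qed

lemma cop_univ: assumes "is_coproduct C X Y S i1 i2" "f \<in> hom C X T" "g \<in> hom C Y T"
  obtains h where "h \<in> hom C S T" "ccomp C h i1 = f" "ccomp C h i2 = g"
  using assms unfolding is_coproduct_def by blast

lemma cop_basic: assumes "is_coproduct C X Y S i1 i2" shows "i1 \<in> hom C X S" "i2 \<in> hom C Y S"
  using assms unfolding is_coproduct_def by auto

lemma cop_uniq: assumes "category C" "is_coproduct C X Y S i1 i2" "h \<in> hom C S T" "h' \<in> hom C S T"
   "ccomp C h i1 = ccomp C h' i1" "ccomp C h i2 = ccomp C h' i2"
  shows "h = h'"
proof -
  note b = cop_basic[OF assms(2)]
  have u: "ccomp C h i1 \<in> hom C X T" "ccomp C h i2 \<in> hom C Y T" using assms b by (auto simp: hom_def)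
  then obtain h0 where "\<forall>h' \<in> hom C S T. ccomp C h' i1 = ccomp C h i1 \<and> ccomp C h' i2 = ccomp C h i2 \<longrightarrow> h' = h0"
    using assms(2) unfolding is_coproduct_def by blast
  then show ?thesis using assms by metis
qed

lemma comp_in_hom: "category C \<Longrightarrow> f \<in> hom C x y \<Longrightarrow> g \<in> hom C y z \<Longrightarrow> ccomp C g f \<in> hom C x z"
  by (simp add: hom_def)

lemma assoc_h: "category C \<Longrightarrow> f \<in> hom C x y \<Longrightarrow> g \<in> hom C y z \<Longrightarrow> h \<in> hom C z w \<Longrightarrow>
   ccomp C h (ccomp C g f) = ccomp C (ccomp C h g) f"
  by (simp add: hom_def cc_assoc)

lemma po_iso: assumes C: "category C" and P1: "is_pushout C f g p1 q1" and P2: "is_pushout C f g p2 q2"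
  shows "\<exists>\<phi>\<in>hom C (ccod C p1) (ccod C p2). iso C \<phi> \<and> ccomp C \<phi> p1 = p2 \<and> ccomp C \<phi> q1 = q2"
proof -
  note b1 = po_basic[OF P1] and b2 = po_basic[OF P2]
  have p1: "p1 \<in> hom C (ccod C f) (ccod C p1)" and q1: "q1 \<in> hom C (ccod C g) (ccod C p1)"
   and p2: "p2 \<in> hom C (ccod C f) (ccod C p2)" and q2: "q2 \<in> hom C (ccod C g) (ccod C p2)"
    using b1 b2 by (auto simp: hom_def)
  obtain \<phi> where \<phi>: "\<phi> \<in> hom C (ccod C p1) (ccod C p2)" "ccomp C \<phi> p1 = p2" "ccomp C \<phi> q1 = q2"
    using po_univ[OF P1 p2 q2 b2(9)] by blast
  obtain \<psi> where \<psi>: "\<psi> \<in> hom C (ccod C p2) (ccod C p1)" "ccomp C \<psi> p2 = p1" "ccomp C \<psi> q2 = q1"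
    using po_univ[OF P2 p1 q1 b1(9)] by blast
  have o1: "ccod C p1 \<in> cobj C" and o2: "ccod C p2 \<in> cobj C" using C b1 b2 cod_obj by auto
  have id1: "cid C (ccod C p1) \<in> hom C (ccod C p1) (ccod C p1)" using C o1 by (simp add: hom_def)
  have id2: "cid C (ccod C p2) \<in> hom C (ccod C p2) (ccod C p2)" using C o2 by (simp add: hom_def)
  have e1: "ccomp C \<psi> \<phi> = cid C (ccod C p1)"
  proof (rule po_uniq[OF C P1])
    show "ccomp C \<psi> \<phi> \<in> hom C (ccod C p1) (ccod C p1)" using comp_in_hom[OF C \<phi>(1) \<psi>(1)] .
    show "cid C (ccod C p1) \<in> hom C (ccod C p1) (ccod C p1)" by fact
    show "ccomp C (ccomp C \<psi> \<phi>) p1 = ccomp C (cid C (ccod C p1)) p1"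
      using assoc_h[OF C p1 \<phi>(1) \<psi>(1)] \<phi> \<psi> cid_l[OF C] b1 by metis
    show "ccomp C (ccomp C \<psi> \<phi>) q1 = ccomp C (cid C (ccod C p1)) q1"
      using assoc_h[OF C q1 \<phi>(1) \<psi>(1)] \<phi> \<psi> cid_l[OF C] b1 by metis
  qed
  have e2: "ccomp C \<phi> \<psi> = cid C (ccod C p2)"
  proof (rule po_uniq[OF C P2])
    show "ccomp C \<phi> \<psi> \<in> hom C (ccod C p2) (ccod C p2)" using comp_in_hom[OF C \<psi>(1) \<phi>(1)] .
    show "cid C (ccod C p2) \<in> hom C (ccod C p2) (ccod C p2)" by fact
    show "ccomp C (ccomp C \<phi> \<psi>) p2 = ccomp C (cid C (ccod C p2)) p2"
      using assoc_h[OF C p2 \<psi>(1) \<phi>(1)] \<phi> \<psi> cid_l[OF C] b2 by metis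
    show "ccomp C (ccomp C \<phi> \<psi>) q2 = ccomp C (cid C (ccod C p2)) q2"
      using assoc_h[OF C q2 \<psi>(1) \<phi>(1)] \<phi> \<psi> cid_l[OF C] b2 by metis
  qed
  have "iso C \<phi>" unfolding iso_def using \<phi>(1) \<psi>(1) e1 e2 by (auto simp: hom_def)
  then show ?thesis using \<phi> by blast
qed

lemma po_paste: assumes C: "category C" and P1: "is_pushout C b a P Q" and P2: "is_pushout C m P s t"
  shows "is_pushout C (ccomp C m b) a s (ccomp C t Q)"
proof -
  note b1 = po_basic[OF P1] and b2 = po_basic[OF P2]
  have mb: "ccomp C m b \<in> carr C" "cdom C (ccomp C m b) = cdom C b" "ccod C (ccomp C m b) = ccod C m"
    using C b1 b2 by auto
  have tQ: "ccomp C t Q \<in> carr C" "cdom C (ccomp C t Q) = ccod C a" "ccod C (ccomp C t Q) = ccod C s"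
    using C b1 b2 by auto
  have comm: "ccomp C s (ccomp C m b) = ccomp C (ccomp C t Q) a"
  proof -
    have "ccomp C s (ccomp C m b) = ccomp C (ccomp C s m) b" using C b1 b2 cc_assoc by metis
    also have "\<dots> = ccomp C (ccomp C t P) b" using b2 by simp
    also have "\<dots> = ccomp C t (ccomp C P b)" using C b1 b2 cc_assoc by metis
    also have "\<dots> = ccomp C t (ccomp C Q a)" using b1 by simp
    also have "\<dots> = ccomp C (ccomp C t Q) a" using C b1 b2 cc_assoc by metis
    finally show ?thesis .
  qed
  show ?thesis unfolding is_pushout_def
  proof (intro conjI allI impI)
    fix T u v assume u: "u \<in> hom C (ccod C (ccomp C m b)) T" and v: "v \<in> hom C (ccod C a) T"
      and c: "ccomp C u (ccomp C m b) = ccomp C v a"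
    have um: "ccomp C u m \<in> hom C (ccod C b) T" using u mb b1 b2 C by (auto simp: hom_def)
    have c1: "ccomp C (ccomp C u m) b = ccomp C v a" using c C b1 b2 u mb cc_assoc by (metis hom_iff)
    obtain h1 where h1: "h1 \<in> hom C (ccod C P) T" "ccomp C h1 P = ccomp C u m" "ccomp C h1 Q = v"
      using po_univ[OF P1 um v c1] by blast
    have u': "u \<in> hom C (ccod C m) T" using u mb by simp
    have h1': "h1 \<in> hom C (ccod C P) T" using h1 by simp
    have c2: "ccomp C u m = ccomp C h1 P" using h1 by simp
    obtain h where h: "h \<in> hom C (ccod C s) T" "ccomp C h s = u" "ccomp C h t = h1"
      using po_univ[OF P2 u' h1' c2] by blast
    have hQ: "ccomp C h (ccomp C t Q) = v" using h h1 C b1 b2 cc_assoc by (metis hom_iff)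
    show "\<exists>h\<in>hom C (ccod C s) T. ccomp C h s = u \<and> ccomp C h (ccomp C t Q) = v \<and>
          (\<forall>h'\<in>hom C (ccod C s) T. ccomp C h' s = u \<and> ccomp C h' (ccomp C t Q) = v \<longrightarrow> h' = h)"
    proof (intro bexI conjI ballI impI)
      fix h' assume h': "h' \<in> hom C (ccod C s) T" and e: "ccomp C h' s = u \<and> ccomp C h' (ccomp C t Q) = v"
      have ht: "ccomp C h' t \<in> hom C (ccod C P) T" using h' b2 C by (auto simp: hom_def)
      have "ccomp C h' t = h1"
      proof (rule po_uniq[OF C P1 ht h1'])
        show "ccomp C (ccomp C h' t) P = ccomp C h1 P"
          using e h' c2 C b2 cc_assoc by (metis hom_iff)
        show "ccomp C (ccomp C h' t) Q = ccomp C h1 Q"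
          using e h' h1 C b1 b2 cc_assoc by (metis hom_iff)
      qed
      then show "h' = h" using po_uniq[OF C P2 h' h(1)] h e by metis
    qed (use h hQ in auto)
  qed (use mb tQ b1 b2 comm in \<open>auto simp: hom_def\<close>)
qed

lemma fs_carr: "factorisation_system C E M \<Longrightarrow> e \<in> E \<Longrightarrow> e \<in> carr C"
  "factorisation_system C E M \<Longrightarrow> m \<in> M \<Longrightarrow> m \<in> carr C"
  unfolding factorisation_system_def by blast+
lemma fs_iso: "factorisation_system C E M \<Longrightarrow> iso C f \<Longrightarrow> f \<in> M"
  unfolding factorisation_system_def by blast
lemma fs_Mcomp: "factorisation_system C E M \<Longrightarrow> m1 \<in> M \<Longrightarrow> m2 \<in> M \<Longrightarrow> ccod C m1 = cdom C m2 \<Longrightarrow> ccomp C m2 m1 \<in> M"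
  unfolding factorisation_system_def by blast
lemma fs_orth: assumes "factorisation_system C E M" "e \<in> E" "m \<in> M" "u \<in> hom C (cdom C e) (cdom C m)"
  "v \<in> hom C (ccod C e) (ccod C m)" "ccomp C m u = ccomp C v e"
  obtains d where "d \<in> hom C (ccod C e) (cdom C m)" "ccomp C d e = u" "ccomp C m d = v"
  using assms unfolding factorisation_system_def by metis
lemma fs_uniq: assumes "factorisation_system C E M" "e \<in> E" "m \<in> M" "u \<in> hom C (cdom C e) (cdom C m)"
  "v \<in> hom C (ccod C e) (ccod C m)" "ccomp C m u = ccomp C v e"
  "d \<in> hom C (ccod C e) (cdom C m)" "ccomp C d e = u" "ccomp C m d = v"
  "d' \<in> hom C (ccod C e) (cdom C m)" "ccomp C d' e = u" "ccomp C m d' = v"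
  shows "d = d'"
proof -
  from assms(1-6) obtain d0 where "\<forall>d' \<in> hom C (ccod C e) (cdom C m). ccomp C d' e = u \<and> ccomp C m d' = v \<longrightarrow> d' = d0"
    unfolding factorisation_system_def by metis
  then show ?thesis using assms(7-12) by metis
qed

lemma lemU: assumes C: "category C" and FS: "factorisation_system C E M"
  and S1: "is_coproduct C X Y S j1 j2" and S2: "is_coproduct C X Y S' j1' j2'"
  and e1: "e1 \<in> E" "e1 \<in> hom C S N1" and n1: "n1 \<in> M" "n1 \<in> hom C N1 K"
  and e2: "e2 \<in> E" "e2 \<in> hom C S' N2" and n2: "n2 \<in> M" "n2 \<in> hom C N2 K"
  and eq1: "ccomp C n1 (ccomp C e1 j1) = ccomp C n2 (ccomp C e2 j1')"
  and eq2: "ccomp C n1 (ccomp C e1 j2) = ccomp C n2 (ccomp C e2 j2')"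
  shows "cospan_iso C (ccomp C e1 j1, ccomp C e1 j2) (ccomp C e2 j1', ccomp C e2 j2')"
proof -
  note c1 = cop_basic[OF S1] and c2 = cop_basic[OF S2]
  obtain \<sigma> where \<sigma>: "\<sigma> \<in> hom C S S'" "ccomp C \<sigma> j1 = j1'" "ccomp C \<sigma> j2 = j2'"
    using cop_univ[OF S1 c2] by blast
  obtain \<tau> where \<tau>: "\<tau> \<in> hom C S' S" "ccomp C \<tau> j1' = j1" "ccomp C \<tau> j2' = j2"
    using cop_univ[OF S2 c1] by blast
  have oS: "S \<in> cobj C" using c1 C cod_obj hom_iff by metis
  have idS: "cid C S \<in> hom C S S" using C oS by (simp add: hom_def)
  have ts: "ccomp C \<tau> \<sigma> = cid C S"
  proof (rule cop_uniq[OF C S1 comp_in_hom[OF C \<sigma>(1) \<tau>(1)] idS])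
    show "ccomp C (ccomp C \<tau> \<sigma>) j1 = ccomp C (cid C S) j1"
      using assoc_h[OF C c1(1) \<sigma>(1) \<tau>(1)] \<sigma> \<tau> cid_l[OF C] c1 hom_iff by metis
    show "ccomp C (ccomp C \<tau> \<sigma>) j2 = ccomp C (cid C S) j2"
      using assoc_h[OF C c1(2) \<sigma>(1) \<tau>(1)] \<sigma> \<tau> cid_l[OF C] c1 hom_iff by metis
  qed
  have oS': "S' \<in> cobj C" using c2 C cod_obj hom_iff by metis
  have idS': "cid C S' \<in> hom C S' S'" using C oS' by (simp add: hom_def)
  have st: "ccomp C \<sigma> \<tau> = cid C S'"
  proof (rule cop_uniq[OF C S2 comp_in_hom[OF C \<tau>(1) \<sigma>(1)] idS'])
    show "ccomp C (ccomp C \<sigma> \<tau>) j1' = ccomp C (cid C S') j1'"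
      using assoc_h[OF C c2(1) \<tau>(1) \<sigma>(1)] \<sigma> \<tau> cid_l[OF C] c2 hom_iff by metis
    show "ccomp C (ccomp C \<sigma> \<tau>) j2' = ccomp C (cid C S') j2'"
      using assoc_h[OF C c2(2) \<tau>(1) \<sigma>(1)] \<sigma> \<tau> cid_l[OF C] c2 hom_iff by metis
  qed
  have ne1: "ccomp C n1 e1 \<in> hom C S K" using comp_in_hom[OF C e1(2) n1(2)] .
  have ne2: "ccomp C n2 e2 \<in> hom C S' K" using comp_in_hom[OF C e2(2) n2(2)] .
  have w: "ccomp C n1 e1 = ccomp C (ccomp C n2 e2) \<sigma>"
  proof (rule cop_uniq[OF C S1 ne1 comp_in_hom[OF C \<sigma>(1) ne2]])
    show "ccomp C (ccomp C n1 e1) j1 = ccomp C (ccomp C (ccomp C n2 e2) \<sigma>) j1"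
      using assoc_h[OF C c1(1) e1(2) n1(2)] assoc_h[OF C c1(1) \<sigma>(1) ne2] assoc_h[OF C c2(1) e2(2) n2(2)] eq1 \<sigma> by metis
    show "ccomp C (ccomp C n1 e1) j2 = ccomp C (ccomp C (ccomp C n2 e2) \<sigma>) j2"
      using assoc_h[OF C c1(2) e1(2) n1(2)] assoc_h[OF C c1(2) \<sigma>(1) ne2] assoc_h[OF C c2(2) e2(2) n2(2)] eq2 \<sigma> by metis
  qed
  have w': "ccomp C n2 e2 = ccomp C (ccomp C n1 e1) \<tau>"
  proof -
    have "ccomp C (ccomp C n1 e1) \<tau> = ccomp C (ccomp C n2 e2) (ccomp C \<sigma> \<tau>)"
      using w assoc_h[OF C \<tau>(1) \<sigma>(1) ne2] by metis
    also have "\<dots> = ccomp C n2 e2" using st cid_r[OF C] ne2 hom_iff by metis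
    finally show ?thesis by simp
  qed
  have dn: "cdom C n2 = N2" "ccod C n2 = K" "cdom C n1 = N1" "ccod C n1 = K"
    "cdom C e1 = S" "ccod C e1 = N1" "cdom C e2 = S'" "ccod C e2 = N2"
    using n1 n2 e1 e2 by (auto simp: hom_def)
  obtain d where d: "d \<in> hom C N1 N2" "ccomp C d e1 = ccomp C e2 \<sigma>" "ccomp C n2 d = n1"
  proof (rule fs_orth[OF FS e1(1) n2(1)])
    show "ccomp C e2 \<sigma> \<in> hom C (cdom C e1) (cdom C n2)" using comp_in_hom[OF C \<sigma>(1) e2(2)] dn by simp
    show "n1 \<in> hom C (ccod C e1) (ccod C n2)" using n1 dn by simp
    show "ccomp C n2 (ccomp C e2 \<sigma>) = ccomp C n1 e1" using w assoc_h[OF C \<sigma>(1) e2(2) n2(2)] by metis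
  qed (use dn in auto)
  obtain d' where d': "d' \<in> hom C N2 N1" "ccomp C d' e2 = ccomp C e1 \<tau>" "ccomp C n1 d' = n2"
  proof (rule fs_orth[OF FS e2(1) n1(1)])
    show "ccomp C e1 \<tau> \<in> hom C (cdom C e2) (cdom C n1)" using comp_in_hom[OF C \<tau>(1) e1(2)] dn by simp
    show "n2 \<in> hom C (ccod C e2) (ccod C n1)" using n2 dn by simp
    show "ccomp C n1 (ccomp C e1 \<tau>) = ccomp C n2 e2" using w' assoc_h[OF C \<tau>(1) e1(2) n1(2)] by metis
  qed (use dn in auto)
  have oN1: "N1 \<in> cobj C" using e1 C cod_obj hom_iff by metis
  have oN2: "N2 \<in> cobj C" using e2 C cod_obj hom_iff by metis
  have id1: "cid C N1 \<in> hom C N1 N1" using C oN1 by (simp add: hom_def)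
  have id2: "cid C N2 \<in> hom C N2 N2" using C oN2 by (simp add: hom_def)
  have dd1: "ccomp C d' d = cid C N1"
  proof (rule fs_uniq[OF FS e1(1) n1(1), of e1 n1])
    show "e1 \<in> hom C (cdom C e1) (cdom C n1)" using e1 dn by simp
    show "n1 \<in> hom C (ccod C e1) (ccod C n1)" using n1 dn by simp
    show "ccomp C n1 e1 = ccomp C n1 e1" ..
    show "ccomp C d' d \<in> hom C (ccod C e1) (cdom C n1)" using comp_in_hom[OF C d(1) d'(1)] dn by simp
    show "cid C N1 \<in> hom C (ccod C e1) (cdom C n1)" using id1 dn by simp
    show "ccomp C (cid C N1) e1 = e1" using cid_l[OF C] e1 hom_iff by metis
    show "ccomp C n1 (cid C N1) = n1" using cid_r[OF C] n1 hom_iff by metis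
    have "ccomp C (ccomp C d' d) e1 = ccomp C d' (ccomp C e2 \<sigma>)" using assoc_h[OF C e1(2) d(1) d'(1)] d by metis
    also have "\<dots> = ccomp C (ccomp C e1 \<tau>) \<sigma>" using assoc_h[OF C \<sigma>(1) e2(2) d'(1)] d' by metis
    also have "\<dots> = ccomp C e1 (ccomp C \<tau> \<sigma>)" using assoc_h[OF C \<sigma>(1) \<tau>(1) e1(2)] by metis
    also have "\<dots> = e1" using ts cid_r[OF C] e1 hom_iff by metis
    finally show "ccomp C (ccomp C d' d) e1 = e1" .
    show "ccomp C n1 (ccomp C d' d) = n1" using assoc_h[OF C d(1) d'(1) n1(2)] d d' by metis
  qed
  have dd2: "ccomp C d d' = cid C N2"
  proof (rule fs_uniq[OF FS e2(1) n2(1), of e2 n2])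
    show "e2 \<in> hom C (cdom C e2) (cdom C n2)" using e2 dn by simp
    show "n2 \<in> hom C (ccod C e2) (ccod C n2)" using n2 dn by simp
    show "ccomp C n2 e2 = ccomp C n2 e2" ..
    show "ccomp C d d' \<in> hom C (ccod C e2) (cdom C n2)" using comp_in_hom[OF C d'(1) d(1)] dn by simp
    show "cid C N2 \<in> hom C (ccod C e2) (cdom C n2)" using id2 dn by simp
    show "ccomp C (cid C N2) e2 = e2" using cid_l[OF C] e2 hom_iff by metis
    show "ccomp C n2 (cid C N2) = n2" using cid_r[OF C] n2 hom_iff by metis
    have "ccomp C (ccomp C d d') e2 = ccomp C d (ccomp C e1 \<tau>)" using assoc_h[OF C e2(2) d'(1) d(1)] d' by metis
    also have "\<dots> = ccomp C (ccomp C e2 \<sigma>) \<tau>" using assoc_h[OF C \<tau>(1) e1(2) d(1)] d by metis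
    also have "\<dots> = ccomp C e2 (ccomp C \<sigma> \<tau>)" using assoc_h[OF C \<tau>(1) \<sigma>(1) e2(2)] by metis
    also have "\<dots> = e2" using st cid_r[OF C] e2 hom_iff by metis
    finally show "ccomp C (ccomp C d d') e2 = e2" .
    show "ccomp C n2 (ccomp C d d') = n2" using assoc_h[OF C d'(1) d(1) n2(2)] d d' by metis
  qed
  have isod: "iso C d" unfolding iso_def using d(1) d'(1) dd1 dd2 by (auto simp: hom_def)
  have r1: "ccomp C d (ccomp C e1 j1) = ccomp C e2 j1'"
    using assoc_h[OF C c1(1) e1(2) d(1)] assoc_h[OF C c1(1) \<sigma>(1) e2(2)] d \<sigma> by metis
  have r2: "ccomp C d (ccomp C e1 j2) = ccomp C e2 j2'"
    using assoc_h[OF C c1(2) e1(2) d(1)] assoc_h[OF C c1(2) \<sigma>(1) e2(2)] d \<sigma> by metis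
  have cods: "ccod C (ccomp C e1 j1) = N1" "ccod C (ccomp C e2 j1') = N2"
    using comp_in_hom[OF C c1(1) e1(2)] comp_in_hom[OF C c2(1) e2(2)] by (auto simp: hom_def)
  show ?thesis unfolding cospan_iso_def using d(1) isod r1 r2 cods by auto
qed

lemma rassoc: "category C \<Longrightarrow> f \<in> carr C \<Longrightarrow> g \<in> carr C \<Longrightarrow> h \<in> carr C \<Longrightarrow> ccod C f = cdom C g \<Longrightarrow> ccod C g = cdom C h \<Longrightarrow>
   ccomp C (ccomp C h g) f = ccomp C h (ccomp C g f)"
  by (simp add: cc_assoc)

lemma Epart_R: assumes C: "category C" and FS: "factorisation_system C E M"
  and EP: "is_Epart C E M (i,u) c'"
  shows "\<exists>S j1 j2 e n. is_coproduct C (cdom C i) (cdom C u) S j1 j2 \<and> e \<in> E \<and> n \<in> M \<and>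
     e \<in> hom C S (cdom C n) \<and> n \<in> hom C (cdom C n) (ccod C i) \<and>
     c' = (ccomp C e j1, ccomp C e j2) \<and> ccomp C n (ccomp C e j1) = i \<and> ccomp C n (ccomp C e j2) = u"
proof -
  obtain x y where c': "c' = (x,y)" by (cases c')
  from EP obtain S j1 j2 h e m where H: "is_coproduct C (cdom C i) (cdom C u) S j1 j2"
        "h \<in> hom C S (ccod C i)" "ccomp C h j1 = i" "ccomp C h j2 = u"
        "e \<in> E" "m \<in> M" "cdom C e = S" "ccod C e = cdom C m" "ccod C m = ccod C i"
        "ccomp C m e = h" "x = ccomp C e j1" "y = ccomp C e j2"
    unfolding is_Epart_def c' by auto
  have e: "e \<in> hom C S (cdom C m)" using H fs_carr[OF FS] by (auto simp: hom_def)
  have m: "m \<in> hom C (cdom C m) (ccod C i)" using H fs_carr[OF FS] by (auto simp: hom_def)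
  note cb = cop_basic[OF H(1)]
  have "ccomp C m (ccomp C e j1) = i" using assoc_h[OF C cb(1) e m] H by simp
  moreover have "ccomp C m (ccomp C e j2) = u" using assoc_h[OF C cb(2) e m] H by simp
  ultimately show ?thesis using H e m c' by blast
qed

lemma Epart_cospan: "is_Epart C E M (i,u) c' \<Longrightarrow> i \<in> carr C \<and> u \<in> carr C \<and> ccod C i = ccod C u"
  unfolding is_Epart_def is_cospan_def by auto

lemma fun_hom: "is_functor C D Fo Fa \<Longrightarrow> f \<in> hom C x y \<Longrightarrow> Fa f \<in> hom D (Fo x) (Fo y)"
  unfolding is_functor_def hom_def by auto
lemma fun_comp: "is_functor C D Fo Fa \<Longrightarrow> f \<in> carr C \<Longrightarrow> g \<in> carr C \<Longrightarrow> ccod C f = cdom C g \<Longrightarrow>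
   Fa (ccomp C g f) = ccomp D (Fa g) (Fa f)"
  unfolding is_functor_def by blast

theorem mainTheorem5:
  fixes C :: "('o, 'a) cat" and D :: "('p, 'b) cat"
    and E M :: "'a set" and E' M' :: "'b set"
    and Fo :: "'o \<Rightarrow> 'p" and Fa :: "'a \<Rightarrow> 'b"
    and X Y Z :: 'o and f g :: "'a \<times> 'a"
  assumes "category C" and "category D"
    and "has_finite_colimits C" and "has_finite_colimits D"
    and "factorisation_system C E M" and "costable C M"
    and "factorisation_system D E' M'" and "costable D M'"
    and "is_functor C D Fo Fa" and "preserves_finite_colimits C D Fo Fa"
    and "Fa ` M \<subseteq> M'"
    and "X \<in> cobj C" and "Y \<in> cobj C" and "Z \<in> cobj C"
    and "is_corel C E X Y f" and "is_corel C E Y Z g"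
  shows "\<forall>gf bgf bf bg r.
           is_corel_comp C E M f g gf \<longrightarrow> is_box D E' M' Fa gf bgf \<longrightarrow>
           is_box D E' M' Fa f bf \<longrightarrow> is_box D E' M' Fa g bg \<longrightarrow>
           is_corel_comp D E' M' bf bg r \<longrightarrow>
           cospan_iso D bgf r"
proof (intro allI impI)
  fix gf bgf bf bg r
  assume GF: "is_corel_comp C E M f g gf" and BGF: "is_box D E' M' Fa gf bgf"
    and BF: "is_box D E' M' Fa f bf" and BG: "is_box D E' M' Fa g bg"
    and R: "is_corel_comp D E' M' bf bg r"
  note C = assms(1) and D = assms(2) and FSC = assms(5) and FSD = assms(7) and CSD = assms(8)
    and F = assms(9) and PF = assms(10) and FM = assms(11)
  obtain i1 u1 where f: "f = (i1,u1)" by (cases f)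
  obtain i2 u2 where g: "g = (i2,u2)" by (cases g)
  have cf: "i1 \<in> carr C" "u1 \<in> carr C" "cdom C i1 = X" "cdom C u1 = Y" "ccod C i1 = ccod C u1"
    using assms(15) unfolding f is_corel_def is_cospan_def by auto
  have cg: "i2 \<in> carr C" "u2 \<in> carr C" "cdom C i2 = Y" "cdom C u2 = Z" "ccod C i2 = ccod C u2"
    using assms(16) unfolding g is_corel_def is_cospan_def by auto
  define N1 where "N1 = ccod C i1"
  define N2 where "N2 = ccod C i2"
  have hi1: "i1 \<in> hom C X N1" and hu1: "u1 \<in> hom C Y N1" using cf by (auto simp: hom_def N1_def)
  have hi2: "i2 \<in> hom C Y N2" and hu2: "u2 \<in> hom C Z N2" using cg by (auto simp: hom_def N2_def)
  obtain k1 k2 p q where PO: "is_pushout C u1 i2 p q" and k1: "k1 = ccomp C p i1" and k2: "k2 = ccomp C q u2"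
    and EPk: "is_Epart C E M (k1,k2) gf"
    using GF unfolding is_corel_comp_def is_cospan_comp_def f g by auto
  note pb = po_basic[OF PO]
  define W where "W = ccod C p"
  have hp: "p \<in> hom C N1 W" and hq: "q \<in> hom C N2 W"
    using pb cf cg by (auto simp: hom_def W_def N1_def N2_def)
  have hk1: "k1 \<in> hom C X W" and hk2: "k2 \<in> hom C Z W"
    using comp_in_hom[OF C hi1 hp] comp_in_hom[OF C hu2 hq] k1 k2 by auto
  obtain S j1 j2 e m where GFd: "is_coproduct C X Z S j1 j2" "e \<in> E" "m \<in> M"
     "e \<in> hom C S (cdom C m)" "m \<in> hom C (cdom C m) W"
     "gf = (ccomp C e j1, ccomp C e j2)" "ccomp C m (ccomp C e j1) = k1" "ccomp C m (ccomp C e j2) = k2"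
    using Epart_R[OF C FSC EPk] hk1 hk2 by (auto simp: hom_def)
  note sb = cop_basic[OF GFd(1)]
  define V where "V = cdom C m"
  have ej1: "ccomp C e j1 \<in> hom C X V" and ej2: "ccomp C e j2 \<in> hom C Z V"
    using comp_in_hom[OF C sb(1) GFd(4)] comp_in_hom[OF C sb(2) GFd(4)] V_def by auto
  have hm: "m \<in> hom C V W" using GFd V_def by simp
  have Fej1: "Fa (ccomp C e j1) \<in> hom D (Fo X) (Fo V)" using fun_hom[OF F ej1] .
  have Fej2: "Fa (ccomp C e j2) \<in> hom D (Fo Z) (Fo V)" using fun_hom[OF F ej2] .
  have Fm: "Fa m \<in> hom D (Fo V) (Fo W)" using fun_hom[OF F hm] .
  have FmM: "Fa m \<in> M'" using FM GFd by blast
  obtain S' j1' j2' e' n' where B: "is_coproduct D (Fo X) (Fo Z) S' j1' j2'" "e' \<in> E'" "n' \<in> M'"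
     "e' \<in> hom D S' (cdom D n')" "n' \<in> hom D (cdom D n') (Fo V)"
     "bgf = (ccomp D e' j1', ccomp D e' j2')" "ccomp D n' (ccomp D e' j1') = Fa (ccomp C e j1)"
     "ccomp D n' (ccomp D e' j2') = Fa (ccomp C e j2)"
    using Epart_R[OF D FSD BGF[unfolded is_box_def GFd(6), simplified]] Fej1 Fej2 by (auto simp: hom_def)
  define nB where "nB = ccomp D (Fa m) n'"
  have hnB: "nB \<in> hom D (cdom D n') (Fo W)" using comp_in_hom[OF D B(5) Fm] nB_def by simp
  have nBM: "nB \<in> M'" unfolding nB_def using fs_Mcomp[OF FSD B(3) FmM] B(5) Fm by (auto simp: hom_def)
  note sb' = cop_basic[OF B(1)]
  have nB1: "ccomp D nB (ccomp D e' j1') = ccomp D (Fa p) (Fa i1)"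
  proof -
    have x: "ccomp D e' j1' \<in> hom D (Fo X) (cdom D n')" using comp_in_hom[OF D sb'(1) B(4)] .
    have "ccomp D nB (ccomp D e' j1') = ccomp D (Fa m) (Fa (ccomp C e j1))"
      using assoc_h[OF D x B(5) Fm] B(7) nB_def by simp
    also have "\<dots> = Fa (ccomp C m (ccomp C e j1))" using fun_comp[OF F] ej1 hm by (simp add: hom_def)
    also have "\<dots> = ccomp D (Fa p) (Fa i1)" using GFd(7) k1 fun_comp[OF F] hi1 hp by (simp add: hom_def)
    finally show ?thesis .
  qed
  have nB2: "ccomp D nB (ccomp D e' j2') = ccomp D (Fa q) (Fa u2)"
  proof -
    have x: "ccomp D e' j2' \<in> hom D (Fo Z) (cdom D n')" using comp_in_hom[OF D sb'(2) B(4)] .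
    have "ccomp D nB (ccomp D e' j2') = ccomp D (Fa m) (Fa (ccomp C e j2))"
      using assoc_h[OF D x B(5) Fm] B(8) nB_def by simp
    also have "\<dots> = Fa (ccomp C m (ccomp C e j2))" using fun_comp[OF F] ej2 hm by (simp add: hom_def)
    also have "\<dots> = ccomp D (Fa q) (Fa u2)" using GFd(8) k2 fun_comp[OF F] hu2 hq by (simp add: hom_def)
    finally show ?thesis .
  qed

  have Fi1: "Fa i1 \<in> hom D (Fo X) (Fo N1)" and Fu1: "Fa u1 \<in> hom D (Fo Y) (Fo N1)"
    using fun_hom[OF F hi1] fun_hom[OF F hu1] .
  have Fi2: "Fa i2 \<in> hom D (Fo Y) (Fo N2)" and Fu2: "Fa u2 \<in> hom D (Fo Z) (Fo N2)"
    using fun_hom[OF F hi2] fun_hom[OF F hu2] .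
  obtain S1 a1 b1 e1 n1 where B1: "is_coproduct D (Fo X) (Fo Y) S1 a1 b1" "e1 \<in> E'" "n1 \<in> M'"
     "e1 \<in> hom D S1 (cdom D n1)" "n1 \<in> hom D (cdom D n1) (Fo N1)"
     "bf = (ccomp D e1 a1, ccomp D e1 b1)" "ccomp D n1 (ccomp D e1 a1) = Fa i1"
     "ccomp D n1 (ccomp D e1 b1) = Fa u1"
    using Epart_R[OF D FSD BF[unfolded is_box_def f, simplified]] Fi1 Fu1 by (auto simp: hom_def)
  obtain S2 a2 b2 e2 n2 where B2: "is_coproduct D (Fo Y) (Fo Z) S2 a2 b2" "e2 \<in> E'" "n2 \<in> M'"
     "e2 \<in> hom D S2 (cdom D n2)" "n2 \<in> hom D (cdom D n2) (Fo N2)"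
     "bg = (ccomp D e2 a2, ccomp D e2 b2)" "ccomp D n2 (ccomp D e2 a2) = Fa i2"
     "ccomp D n2 (ccomp D e2 b2) = Fa u2"
    using Epart_R[OF D FSD BG[unfolded is_box_def g, simplified]] Fi2 Fu2 by (auto simp: hom_def)
  define A1 where "A1 = cdom D n1"
  define A2 where "A2 = cdom D n2"
  note c1 = cop_basic[OF B1(1)] and c2 = cop_basic[OF B2(1)]
  have ea1: "ccomp D e1 a1 \<in> hom D (Fo X) A1" and eb1: "ccomp D e1 b1 \<in> hom D (Fo Y) A1"
    using comp_in_hom[OF D c1(1) B1(4)] comp_in_hom[OF D c1(2) B1(4)] A1_def by auto
  have ea2: "ccomp D e2 a2 \<in> hom D (Fo Y) A2" and eb2: "ccomp D e2 b2 \<in> hom D (Fo Z) A2"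
    using comp_in_hom[OF D c2(1) B2(4)] comp_in_hom[OF D c2(2) B2(4)] A2_def by auto
  have hn1: "n1 \<in> hom D A1 (Fo N1)" and hn2: "n2 \<in> hom D A2 (Fo N2)" using B1 B2 A1_def A2_def by auto
  obtain P Q where POD: "is_pushout D (ccomp D e1 b1) (ccomp D e2 a2) P Q"
    and EPr: "is_Epart D E' M' (ccomp D P (ccomp D e1 a1), ccomp D Q (ccomp D e2 b2)) r"
    using R unfolding is_corel_comp_def is_cospan_comp_def B1(6) B2(6) by auto
  note qb = po_basic[OF POD]
  define R0 where "R0 = ccod D P"
  have hP: "P \<in> hom D A1 R0" and hQ: "Q \<in> hom D A2 R0"
    using qb eb1 ea2 by (auto simp: hom_def R0_def)
  have kr1: "ccomp D P (ccomp D e1 a1) \<in> hom D (Fo X) R0" using comp_in_hom[OF D ea1 hP] .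
  have kr2: "ccomp D Q (ccomp D e2 b2) \<in> hom D (Fo Z) R0" using comp_in_hom[OF D eb2 hQ] .
  obtain S3 c1' c2' er nr where B3: "is_coproduct D (Fo X) (Fo Z) S3 c1' c2'" "er \<in> E'" "nr \<in> M'"
     "er \<in> hom D S3 (cdom D nr)" "nr \<in> hom D (cdom D nr) R0"
     "r = (ccomp D er c1', ccomp D er c2')" "ccomp D nr (ccomp D er c1') = ccomp D P (ccomp D e1 a1)"
     "ccomp D nr (ccomp D er c2') = ccomp D Q (ccomp D e2 b2)"
    using Epart_R[OF D FSD EPr] kr1 kr2 by (auto simp: hom_def)
  have "\<exists>s t. is_pushout D n1 P s t"
    using assms(4) hn1 hP unfolding has_finite_colimits_def by (auto simp: hom_def)
  then obtain s t where PO1: "is_pushout D n1 P s t" by blast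
  have tM: "t \<in> M'" using CSD B1(3) PO1 unfolding costable_def by blast
  note pb1 = po_basic[OF PO1]
  define R1 where "R1 = ccod D s"
  have hs: "s \<in> hom D (Fo N1) R1" and ht: "t \<in> hom D R0 R1"
    using pb1 hn1 hP by (auto simp: hom_def R1_def)
  have PA: "is_pushout D (ccomp D n1 (ccomp D e1 b1)) (ccomp D e2 a2) s (ccomp D t Q)"
    using po_paste[OF D POD PO1] .
  have PA': "is_pushout D (ccomp D e2 a2) (Fa u1) (ccomp D t Q) s"
    using po_sym[OF PA] B1(8) by simp
  have htQ: "ccomp D t Q \<in> hom D A2 R1" using comp_in_hom[OF D hQ ht] .
  have "\<exists>s' t'. is_pushout D n2 (ccomp D t Q) s' t'"
  proof -
    have "n2 \<in> carr D" "ccomp D t Q \<in> carr D" "cdom D n2 = cdom D (ccomp D t Q)"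
      using hn2 htQ by (auto simp: hom_def)
    moreover have PD: "\<forall>f\<in>carr D. \<forall>g\<in>carr D. cdom D f = cdom D g \<longrightarrow> (\<exists>p q. is_pushout D f g p q)"
      using assms(4) unfolding has_finite_colimits_def by blast
    ultimately show ?thesis by blast
  qed
  then obtain s2 t2 where PO2: "is_pushout D n2 (ccomp D t Q) s2 t2" by blast
  have t2M: "t2 \<in> M'" using CSD B2(3) PO2 unfolding costable_def by blast
  note pb2 = po_basic[OF PO2]
  define R2 where "R2 = ccod D s2"
  have hs2: "s2 \<in> hom D (Fo N2) R2" and ht2: "t2 \<in> hom D R1 R2"
    using pb2 hn2 htQ by (auto simp: hom_def R2_def)
  have PB: "is_pushout D (ccomp D n2 (ccomp D e2 a2)) (Fa u1) s2 (ccomp D t2 s)"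
    using po_paste[OF D PA' PO2] .
  have PB': "is_pushout D (Fa u1) (Fa i2) (ccomp D t2 s) s2"
    using po_sym[OF PB] B2(7) by simp
  have PFp: "is_pushout D (Fa u1) (Fa i2) (Fa p) (Fa q)"
    using PF PO unfolding preserves_finite_colimits_def by blast
  have Fp: "Fa p \<in> hom D (Fo N1) (Fo W)" and Fq: "Fa q \<in> hom D (Fo N2) (Fo W)"
    using fun_hom[OF F hp] fun_hom[OF F hq] .
  have ht2s: "ccomp D t2 s \<in> hom D (Fo N1) R2" using comp_in_hom[OF D hs ht2] .
  obtain \<phi> where \<phi>: "\<phi> \<in> hom D R2 (Fo W)" "iso D \<phi>" "ccomp D \<phi> (ccomp D t2 s) = Fa p" "ccomp D \<phi> s2 = Fa q"
    using po_iso[OF D PB' PFp] ht2s Fp by (auto simp: hom_def)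
  have \<phi>M: "\<phi> \<in> M'" using fs_iso[OF FSD \<phi>(2)] .
  define A3 where "A3 = cdom D nr"
  have hnr: "nr \<in> hom D A3 R0" using B3 A3_def by simp
  define nR where "nR = ccomp D \<phi> (ccomp D t2 (ccomp D t nr))"
  have h1: "ccomp D t nr \<in> hom D A3 R1" using comp_in_hom[OF D hnr ht] .
  have h2: "ccomp D t2 (ccomp D t nr) \<in> hom D A3 R2" using comp_in_hom[OF D h1 ht2] .
  have hnR: "nR \<in> hom D A3 (Fo W)" using comp_in_hom[OF D h2 \<phi>(1)] nR_def by simp
  have nRM: "nR \<in> M'"
  proof -
    have "ccomp D t nr \<in> M'" using fs_Mcomp[OF FSD B3(3) tM] hnr ht by (auto simp: hom_def)
    then have "ccomp D t2 (ccomp D t nr) \<in> M'" using fs_Mcomp[OF FSD _ t2M] h1 ht2 by (auto simp: hom_def)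
    then show ?thesis unfolding nR_def using fs_Mcomp[OF FSD _ \<phi>M] h2 \<phi>(1) by (auto simp: hom_def)
  qed
  note c3 = cop_basic[OF B3(1)]
  have x1: "ccomp D er c1' \<in> hom D (Fo X) A3" and x2: "ccomp D er c2' \<in> hom D (Fo Z) A3"
    using comp_in_hom[OF D c3(1) B3(4)] comp_in_hom[OF D c3(2) B3(4)] A3_def by auto
  have gen: "\<And>x y. x \<in> hom D y A3 \<Longrightarrow> ccomp D nR x = ccomp D \<phi> (ccomp D t2 (ccomp D t (ccomp D nr x)))"
  proof -
    fix x y assume x: "x \<in> hom D y A3"
    have "ccomp D nR x = ccomp D \<phi> (ccomp D (ccomp D t2 (ccomp D t nr)) x)"
      unfolding nR_def using assoc_h[OF D x h2 \<phi>(1)] by simp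
    also have "\<dots> = ccomp D \<phi> (ccomp D t2 (ccomp D (ccomp D t nr) x))"
      using assoc_h[OF D x h1 ht2] by simp
    also have "\<dots> = ccomp D \<phi> (ccomp D t2 (ccomp D t (ccomp D nr x)))"
      using assoc_h[OF D x hnr ht] by simp
    finally show "ccomp D nR x = ccomp D \<phi> (ccomp D t2 (ccomp D t (ccomp D nr x)))" .
  qed
  have nR1: "ccomp D nR (ccomp D er c1') = ccomp D (Fa p) (Fa i1)"
  proof -
    have "ccomp D nR (ccomp D er c1') = ccomp D \<phi> (ccomp D t2 (ccomp D t (ccomp D P (ccomp D e1 a1))))"
      using gen[OF x1] B3(7) by simp
    also have "ccomp D t (ccomp D P (ccomp D e1 a1)) = ccomp D (ccomp D t P) (ccomp D e1 a1)"
      using assoc_h[OF D ea1 hP ht] .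
    also have "\<dots> = ccomp D (ccomp D s n1) (ccomp D e1 a1)" using pb1(9) by simp
    also have "\<dots> = ccomp D s (Fa i1)" using assoc_h[OF D ea1 hn1 hs] B1(7) by simp
    also have "ccomp D \<phi> (ccomp D t2 (ccomp D s (Fa i1))) = ccomp D (ccomp D \<phi> (ccomp D t2 s)) (Fa i1)"
      using assoc_h[OF D Fi1 hs ht2] assoc_h[OF D Fi1 ht2s \<phi>(1)] by simp
    also have "\<dots> = ccomp D (Fa p) (Fa i1)" using \<phi>(3) by simp
    finally show ?thesis .
  qed
  have nR2: "ccomp D nR (ccomp D er c2') = ccomp D (Fa q) (Fa u2)"
  proof -
    have "ccomp D nR (ccomp D er c2') = ccomp D \<phi> (ccomp D t2 (ccomp D t (ccomp D Q (ccomp D e2 b2))))"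
      using gen[OF x2] B3(8) by simp
    also have "ccomp D t (ccomp D Q (ccomp D e2 b2)) = ccomp D (ccomp D t Q) (ccomp D e2 b2)"
      using assoc_h[OF D eb2 hQ ht] .
    also have "ccomp D t2 (ccomp D (ccomp D t Q) (ccomp D e2 b2)) = ccomp D (ccomp D t2 (ccomp D t Q)) (ccomp D e2 b2)"
      using assoc_h[OF D eb2 htQ ht2] .
    also have "\<dots> = ccomp D (ccomp D s2 n2) (ccomp D e2 b2)" using pb2(9) by simp
    also have "\<dots> = ccomp D s2 (Fa u2)" using assoc_h[OF D eb2 hn2 hs2] B2(8) by simp
    also have "ccomp D \<phi> (ccomp D s2 (Fa u2)) = ccomp D (Fa q) (Fa u2)"
      using assoc_h[OF D Fu2 hs2 \<phi>(1)] \<phi>(4) by simp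
    finally show ?thesis .
  qed
  have "cospan_iso D (ccomp D e' j1', ccomp D e' j2') (ccomp D er c1', ccomp D er c2')"
  proof (rule lemU[OF D FSD B(1) B3(1) B(2) B(4) nBM hnB B3(2) _ nRM])
    show "er \<in> hom D S3 A3" using B3(4) A3_def by simp
    show "nR \<in> hom D A3 (Fo W)" by fact
    show "ccomp D nB (ccomp D e' j1') = ccomp D nR (ccomp D er c1')" using nB1 nR1 by simp
    show "ccomp D nB (ccomp D e' j2') = ccomp D nR (ccomp D er c2')" using nB2 nR2 by simp
  qed
  then show "cospan_iso D bgf r" using B(6) B3(6) by simp
qed

end
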